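(* There are absolute constants $c>0$ and $C$ such that for all $n$: if $f,g\colon\{0,1\}^n\to\{0,1\}$ are uniformly random balanced functions, then with probability at least $1-2^{-2^{cn}}$ there exists a mapping $\phi$ from $f$ to $g$ with ${\sf avgStretch}(\phi)\le C$ and ${\sf avgStretch}(\phi^{-1})\le C$.
   Context: A balanced function has exactly $2^{n-1}$ inputs mapped to $1$; uniformly random balanced means uniform among such functions. A mapping from $f$ to $g$ is a bijection $\phi$ of $\{0,1\}^n$ with $f(z)=g(\phi(z))$ for all $z$. ${\sf avgStretch}(\phi)=\mathbb{E}_{x,i}[{\sf dist}(\phi(x),\phi(x+e_i))]$ with $x$ uniform in $\{0,1\}^n$, $i$ uniform in $[n]$, ${\sf dist}$ Hamming distance. *)

theory Defs
  imports Complex_Main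
begin

text \<open>Points of the Boolean cube {0,1}^n are encoded as subsets of {..<n}
  (the set of coordinates equal to 1).\<close>

definition cube :: "nat \<Rightarrow> nat set set" where
  "cube n = Pow {..<n}"

definition flip :: "nat set \<Rightarrow> nat \<Rightarrow> nat set" where
  "flip x i = x - {i} \<union> ({i} - x)"

definition hdist :: "nat set \<Rightarrow> nat set \<Rightarrow> nat" where
  "hdist x y = card ((x - y) \<union> (y - x))"

text \<open>Boolean functions on the cube, taken extensionally (False outside the cube).\<close>
definition boolfuns :: "nat \<Rightarrow> (nat set \<Rightarrow> bool) set" where
  "boolfuns n = {f. \<forall>x. x \<notin> cube n \<longrightarrow> f x = False}"

definition balanced :: "nat \<Rightarrow> (nat set \<Rightarrow> bool) \<Rightarrow> bool" where
  "balanced n f \<longleftrightarrow> f \<in> boolfuns n \<and> real (card {x \<in> cube n. f x}) = 2 ^ n / 2"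

definition balanced_funs :: "nat \<Rightarrow> (nat set \<Rightarrow> bool) set" where
  "balanced_funs n = {f. balanced n f}"

definition is_mapping :: "nat \<Rightarrow> (nat set \<Rightarrow> bool) \<Rightarrow> (nat set \<Rightarrow> bool) \<Rightarrow> (nat set \<Rightarrow> nat set) \<Rightarrow> bool" where
  "is_mapping n f g \<phi> \<longleftrightarrow> bij_betw \<phi> (cube n) (cube n) \<and> (\<forall>z \<in> cube n. f z = g (\<phi> z))"

definition avgStretch :: "nat \<Rightarrow> (nat set \<Rightarrow> nat set) \<Rightarrow> real" where
  "avgStretch n \<phi> = (\<Sum>x \<in> cube n. \<Sum>i < n. real (hdist (\<phi> x) (\<phi> (flip x i)))) / (real n * 2 ^ n)"

end

theory Submission
  imports Defs "HOL-Probability.Hoeffding" "HOL-Real_Asymp.Real_Asymp"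
begin


lemma cube_finite[simp]: "finite (cube n)"
  by (simp add: cube_def)

lemma cube_mem: "x \<in> cube n \<longleftrightarrow> x \<subseteq> {..<n}"
  by (simp add: cube_def)

lemma cube_elem_finite: "x \<in> cube n \<Longrightarrow> finite x"
  by (auto simp: cube_def intro: finite_subset)

lemma card_cube: "card (cube n) = 2 ^ n"
  by (simp add: cube_def card_Pow)

lemma hdist_sym: "hdist x y = hdist y x"
  unfolding hdist_def by (simp add: Un_commute)

lemma hdist_self[simp]: "hdist x x = 0"
  unfolding hdist_def by simp

lemma hdist_triangle:
  assumes "x \<in> cube n" "y \<in> cube n" "z \<in> cube n"
  shows "hdist x z \<le> hdist x y + hdist y z"
proof -
  have fin: "finite (x - y \<union> (y - x))" "finite (y - z \<union> (z - y))"
    using assms by (auto dest: cube_elem_finite)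
  have "(x - z \<union> (z - x)) \<subseteq> (x - y \<union> (y - x)) \<union> (y - z \<union> (z - y))" by auto
  hence "card (x - z \<union> (z - x)) \<le> card ((x - y \<union> (y - x)) \<union> (y - z \<union> (z - y)))"
    using fin by (intro card_mono) auto
  also have "\<dots> \<le> card (x - y \<union> (y - x)) + card (y - z \<union> (z - y))" by (rule card_Un_le)
  finally show ?thesis by (simp add: hdist_def)
qed

lemma hdist_le_n:
  assumes "x \<in> cube n" "y \<in> cube n"
  shows "hdist x y \<le> n"
proof -
  have "x - y \<union> (y - x) \<subseteq> {..<n}" using assms by (auto simp: cube_def)
  hence "card (x - y \<union> (y - x)) \<le> card {..<n}" by (intro card_mono) auto
  thus ?thesis by (simp add: hdist_def)
qed

lemma flip_cube: "x \<in> cube n \<Longrightarrow> i < n \<Longrightarrow> flip x i \<in> cube n"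
  by (auto simp: cube_def flip_def)

lemma flip_flip: "flip (flip x i) i = x"
  by (auto simp: flip_def)

lemma hdist_flip: "hdist x (flip x i) = 1"
proof -
  have "x - flip x i \<union> (flip x i - x) = {i}" by (auto simp: flip_def)
  thus ?thesis by (simp add: hdist_def)
qed

lemma bij_flip: "i < n \<Longrightarrow> bij_betw (\<lambda>x. flip x i) (cube n) (cube n)"
  by (rule bij_betw_byWitness[where f' = "\<lambda>x. flip x i"])
     (auto simp: flip_flip flip_cube)

definition cost :: "nat \<Rightarrow> (nat set \<Rightarrow> nat set) \<Rightarrow> real" where
  "cost n \<phi> = (\<Sum>x\<in>cube n. real (hdist x (\<phi> x)))"

lemma avgStretch_le_n:
  assumes "\<forall>x\<in>cube n. \<phi> x \<in> cube n"
  shows "avgStretch n \<phi> \<le> n"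
proof (cases "n = 0")
  case True thus ?thesis by (simp add: avgStretch_def)
next
  case False
  have "(\<Sum>x \<in> cube n. \<Sum>i < n. real (hdist (\<phi> x) (\<phi> (flip x i))))
      \<le> (\<Sum>x \<in> cube n. \<Sum>i < n. real n)"
    using assms by (intro sum_mono) (auto intro!: hdist_le_n flip_cube)
  also have "\<dots> = real n * (real n * 2 ^ n)" by (simp add: card_cube)
  finally show ?thesis using False
    by (simp add: avgStretch_def divide_le_eq mult.assoc)
qed

lemma avgStretch_cost:
  assumes "\<forall>x\<in>cube n. \<phi> x \<in> cube n" "n > 0"
  shows "avgStretch n \<phi> \<le> 1 + 2 * cost n \<phi> / 2 ^ n"
proof -
  have "(\<Sum>x \<in> cube n. \<Sum>i < n. real (hdist (\<phi> x) (\<phi> (flip x i))))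
      \<le> (\<Sum>x \<in> cube n. \<Sum>i < n. real (hdist (\<phi> x) x) + 1 + real (hdist (flip x i) (\<phi> (flip x i))))"
  proof (intro sum_mono)
    fix x i assume x: "x \<in> cube n" and i: "i \<in> {..<n}"
    have fx: "flip x i \<in> cube n" using x i flip_cube by auto
    have "hdist (\<phi> x) (\<phi> (flip x i)) \<le> hdist (\<phi> x) x + hdist x (\<phi> (flip x i))"
      using x fx assms by (intro hdist_triangle) auto
    also have "hdist x (\<phi> (flip x i)) \<le> hdist x (flip x i) + hdist (flip x i) (\<phi> (flip x i))"
      using x fx assms by (intro hdist_triangle) auto
    finally show "real (hdist (\<phi> x) (\<phi> (flip x i))) \<le> real (hdist (\<phi> x) x) + 1 + real (hdist (flip x i) (\<phi> (flip x i)))"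
      by (simp add: hdist_flip)
  qed
  also have "\<dots> = (\<Sum>i < n. \<Sum>x \<in> cube n. real (hdist (\<phi> x) x) + 1 + real (hdist (flip x i) (\<phi> (flip x i))))"
    by (rule sum.swap)
  also have "\<dots> = (\<Sum>i < n. cost n \<phi> + 2 ^ n + cost n \<phi>)"
  proof (intro sum.cong refl)
    fix i assume i: "i \<in> {..<n}"
    have "(\<Sum>x \<in> cube n. real (hdist (flip x i) (\<phi> (flip x i)))) = cost n \<phi>"
      unfolding cost_def using bij_flip[of i n] i
      by (intro sum.reindex_bij_betw) auto
    thus "(\<Sum>x \<in> cube n. real (hdist (\<phi> x) x) + 1 + real (hdist (flip x i) (\<phi> (flip x i)))) = cost n \<phi> + 2 ^ n + cost n \<phi>"
      by (simp add: sum.distrib cost_def card_cube hdist_sym)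
  qed
  also have "\<dots> = real n * (2 ^ n + 2 * cost n \<phi>)" by simp
  finally have *: "(\<Sum>x \<in> cube n. \<Sum>i < n. real (hdist (\<phi> x) (\<phi> (flip x i)))) \<le> real n * (2 ^ n + 2 * cost n \<phi>)" .
  have "avgStretch n \<phi> \<le> real n * (2 ^ n + 2 * cost n \<phi>) / (real n * 2 ^ n)"
    unfolding avgStretch_def using assms by (intro divide_right_mono *) auto
  also have "\<dots> = 1 + 2 * cost n \<phi> / 2 ^ n" using assms by (simp add: field_simps)
  finally show ?thesis .
qed

lemma cost_inv:
  assumes "bij_betw \<phi> (cube n) (cube n)"
  shows "cost n (the_inv_into (cube n) \<phi>) = cost n \<phi>"
proof -
  have "cost n (the_inv_into (cube n) \<phi>) = (\<Sum>x\<in>cube n. real (hdist (\<phi> x) (the_inv_into (cube n) \<phi> (\<phi> x))))"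
    unfolding cost_def using assms by (intro sum.reindex_bij_betw[symmetric])
  also have "\<dots> = cost n \<phi>" unfolding cost_def using assms
    by (intro sum.cong refl) (simp add: the_inv_into_f_f bij_betw_def hdist_sym)
  finally show ?thesis .
qed

lemma inv_maps:
  assumes "bij_betw \<phi> (cube n) (cube n)"
  shows "\<forall>x\<in>cube n. the_inv_into (cube n) \<phi> x \<in> cube n"
  using assms by (metis bij_betw_def the_inv_into_into order_refl)



definition key :: "nat \<Rightarrow> nat set \<Rightarrow> nat set" where
  "key k x = x - {..<k}"

definition P1 where "P1 n f g \<phi> = {x\<in>cube n. f x \<and> \<not> g (\<phi> x)}"
definition P2 where "P2 n f g \<phi> = {x\<in>cube n. \<not> f x \<and> g (\<phi> x)}"
definition pres where "pres n k \<phi> \<longleftrightarrow> (\<forall>x\<in>cube n. key k (\<phi> x) = key k x)"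
definition oneS where "oneS n f g k \<phi> \<longleftrightarrow> (\<forall>x\<in>P1 n f g \<phi>. \<forall>y\<in>P2 n f g \<phi>. key k x \<noteq> key k y)"

definition tr :: "nat set \<Rightarrow> nat set \<Rightarrow> nat set \<Rightarrow> nat set" where
  "tr x y z = (if z = x then y else if z = y then x else z)"

lemma tr_bij: "x \<in> A \<Longrightarrow> y \<in> A \<Longrightarrow> bij_betw (tr x y) A A"
  by (rule bij_betw_byWitness[where f' = "tr x y"]) (auto simp: tr_def)

lemma hdist_key:
  assumes "x \<in> cube n" "y \<in> cube n" "key k x = key k y"
  shows "hdist x y \<le> k"
proof -
  have "x - y \<union> (y - x) \<subseteq> {..<k}" using assms(3) unfolding key_def by blast
  hence "card (x - y \<union> (y - x)) \<le> card {..<k}" by (intro card_mono) auto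
  thus ?thesis by (simp add: hdist_def)
qed

lemma swap_lemma:
  fixes n k :: nat
  shows "\<And>\<phi>. card (P1 n f g \<phi>) = m \<Longrightarrow> bij_betw \<phi> (cube n) (cube n) \<Longrightarrow> pres n k \<phi> \<Longrightarrow>
    \<exists>\<psi>. bij_betw \<psi> (cube n) (cube n) \<and> pres n k \<psi> \<and> oneS n f g k \<psi> \<and>
        cost n \<psi> \<le> cost n \<phi> + 2 * k * (real (card (P1 n f g \<phi>)) - real (card (P1 n f g \<psi>))) \<and>
        card (P1 n f g \<psi>) \<le> card (P1 n f g \<phi>)"
proof (induction m rule: less_induct)
  case (less m \<phi>)
  show ?case
  proof (cases "oneS n f g k \<phi>")
    case True
    thus ?thesis using less.prems by (intro exI[of _ \<phi>]) auto
  next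
    case False
    then obtain x y where x: "x \<in> P1 n f g \<phi>" and y: "y \<in> P2 n f g \<phi>" and kxy: "key k x = key k y"
      unfolding oneS_def by blast
    have xc: "x \<in> cube n" and yc: "y \<in> cube n" and xy: "x \<noteq> y"
      using x y by (auto simp: P1_def P2_def)
    define \<phi>' where "\<phi>' = \<phi> \<circ> tr x y"
    have bij': "bij_betw \<phi>' (cube n) (cube n)"
      unfolding \<phi>'_def using less.prems(2) tr_bij[OF xc yc] by (rule bij_betw_trans[rotated])
    have pres': "pres n k \<phi>'"
      using less.prems(3) xc yc kxy unfolding pres_def \<phi>'_def tr_def by auto
    have P1': "P1 n f g \<phi>' = P1 n f g \<phi> - {x}"
      using x y xy unfolding P1_def P2_def \<phi>'_def tr_def by auto
    have finP1: "finite (P1 n f g \<phi>)" unfolding P1_def by simp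
    have cardP1': "card (P1 n f g \<phi>') = card (P1 n f g \<phi>) - 1" "card (P1 n f g \<phi>) \<ge> 1"
      using P1' x finP1 by (auto simp: card_Diff_singleton Suc_le_eq card_gt_0_iff)
    have cost': "cost n \<phi>' \<le> cost n \<phi> + 2 * k"
    proof -
      have fin: "finite (cube n - {x, y})" by simp
      have split: "\<And>h. (\<Sum>z\<in>cube n. h z) = h x + h y + (\<Sum>z\<in>cube n - {x,y}. h z :: real)"
      proof -
        fix h :: "nat set \<Rightarrow> real"
        have "cube n = insert x (insert y (cube n - {x,y}))" using xc yc by auto
        hence "(\<Sum>z\<in>cube n. h z) = (\<Sum>z\<in>insert x (insert y (cube n - {x,y})). h z)" by simp
        also have "\<dots> = h x + h y + (\<Sum>z\<in>cube n - {x,y}. h z)" using xy by simp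
        finally show "(\<Sum>z\<in>cube n. h z) = h x + h y + (\<Sum>z\<in>cube n - {x,y}. h z)" .
      qed
      have rest: "(\<Sum>z\<in>cube n - {x,y}. real (hdist z (\<phi>' z))) = (\<Sum>z\<in>cube n - {x,y}. real (hdist z (\<phi> z)))"
        by (intro sum.cong refl) (auto simp: \<phi>'_def tr_def)
      have phic: "\<phi> x \<in> cube n" "\<phi> y \<in> cube n" using less.prems(2) xc yc by (auto simp: bij_betw_def)
      have h1: "hdist x (\<phi> y) \<le> hdist x y + hdist y (\<phi> y)" using xc yc phic by (intro hdist_triangle)
      have h2: "hdist y (\<phi> x) \<le> hdist y x + hdist x (\<phi> x)" using xc yc phic by (intro hdist_triangle)
      have h3: "hdist x y \<le> k" using hdist_key[OF xc yc kxy] .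
      have "\<phi>' x = \<phi> y" "\<phi>' y = \<phi> x" using xy by (auto simp: \<phi>'_def tr_def)
      thus ?thesis unfolding cost_def split[of "\<lambda>z. real (hdist z (\<phi>' z))"] split[of "\<lambda>z. real (hdist z (\<phi> z))"] rest
        using h1 h2 h3 by (simp add: hdist_sym)
    qed
    have "card (P1 n f g \<phi>') < m" using cardP1' less.prems(1) by simp
    from less.IH[OF this refl bij' pres'] obtain \<psi> where \<psi>:
      "bij_betw \<psi> (cube n) (cube n)" "pres n k \<psi>" "oneS n f g k \<psi>"
      "cost n \<psi> \<le> cost n \<phi>' + 2 * k * (real (card (P1 n f g \<phi>')) - real (card (P1 n f g \<psi>)))"
      "card (P1 n f g \<psi>) \<le> card (P1 n f g \<phi>')" by blast
    have eqc: "real (card (P1 n f g \<phi>)) = real (card (P1 n f g \<phi>')) + 1" using cardP1' by simp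
    have "cost n \<psi> \<le> cost n \<phi> + 2 * k * (real (card (P1 n f g \<phi>)) - real (card (P1 n f g \<psi>)))"
      unfolding eqc using \<psi>(4) cost' by (simp add: algebra_simps)
    thus ?thesis using \<psi> cardP1' by (intro exI[of _ \<psi>]) auto
  qed
qed



lemma blk_count:
  assumes "finite B" "inj_on \<phi> B" "\<phi> ` B = B"
  shows "real (card {x\<in>B. f x}) - real (card {x\<in>B. g x}) =
         real (card {x\<in>B. f x \<and> \<not> g (\<phi> x)}) - real (card {x\<in>B. \<not> f x \<and> g (\<phi> x)})"
proof -
  have a: "card {x\<in>B. f x} = card {x\<in>B. f x \<and> \<not> g (\<phi> x)} + card {x\<in>B. f x \<and> g (\<phi> x)}"
  proof -
    have "card {x\<in>B. f x} = card ({x\<in>B. f x \<and> \<not> g (\<phi> x)} \<union> {x\<in>B. f x \<and> g (\<phi> x)})"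
      by (rule arg_cong[where f=card]) auto
    also have "\<dots> = card {x\<in>B. f x \<and> \<not> g (\<phi> x)} + card {x\<in>B. f x \<and> g (\<phi> x)}"
      by (rule card_Un_disjoint) (use assms(1) in auto)
    finally show ?thesis .
  qed
  have b: "card {x\<in>B. g (\<phi> x)} = card {x\<in>B. \<not> f x \<and> g (\<phi> x)} + card {x\<in>B. f x \<and> g (\<phi> x)}"
  proof -
    have "card {x\<in>B. g (\<phi> x)} = card ({x\<in>B. \<not> f x \<and> g (\<phi> x)} \<union> {x\<in>B. f x \<and> g (\<phi> x)})"
      by (rule arg_cong[where f=card]) auto
    also have "\<dots> = card {x\<in>B. \<not> f x \<and> g (\<phi> x)} + card {x\<in>B. f x \<and> g (\<phi> x)}"
      by (rule card_Un_disjoint) (use assms(1) in auto)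
    finally show ?thesis .
  qed
  have c: "card {x\<in>B. g (\<phi> x)} = card {x\<in>B. g x}"
  proof -
    have "\<phi> ` {x\<in>B. g (\<phi> x)} = {x\<in>B. g x}" using assms(3) by auto
    moreover have "inj_on \<phi> {x\<in>B. g (\<phi> x)}" using assms(2) by (rule inj_on_subset) auto
    ultimately show ?thesis using card_image by fastforce
  qed
  show ?thesis using a b c by simp
qed

definition blk where "blk n k S = {x\<in>cube n. key k x = S}"
definition cnt where "cnt n k h S = card {x\<in>blk n k S. h x}"
definition dev where "dev n f g k = (\<Sum>S\<in>Pow {k..<n}. \<bar>real (cnt n k f S) - real (cnt n k g S)\<bar>)"

lemma key_cube: "x \<in> cube n \<Longrightarrow> key k x \<in> Pow {k..<n}"
  by (auto simp: key_def cube_def)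

lemma pres_image:
  assumes "bij_betw \<phi> (cube n) (cube n)" "pres n k \<phi>"
  shows "\<phi> ` blk n k S = blk n k S" "inj_on \<phi> (blk n k S)"
proof -
  have inj: "inj_on \<phi> (blk n k S)" using assms(1) by (rule inj_on_subset[OF bij_betw_imp_inj_on]) (auto simp: blk_def)
  have sub: "\<phi> ` blk n k S \<subseteq> blk n k S" using assms by (auto simp: blk_def pres_def bij_betw_def)
  have "card (\<phi> ` blk n k S) = card (blk n k S)" using inj by (rule card_image)
  thus "\<phi> ` blk n k S = blk n k S" using sub by (intro card_subset_eq) (auto simp: blk_def)
  show "inj_on \<phi> (blk n k S)" by (rule inj)
qed

lemma card_P1_le:
  assumes "bij_betw \<phi> (cube n) (cube n)" "pres n k \<phi>" "oneS n f g k \<phi>"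
  shows "real (card (P1 n f g \<phi>)) \<le> dev n f g k"
proof -
  have "(\<Sum>S\<in>Pow {k..<n}. sum (\<lambda>_. 1::nat) {x\<in>P1 n f g \<phi>. key k x = S}) = sum (\<lambda>_. 1) (P1 n f g \<phi>)"
    by (rule sum.group) (auto simp: P1_def key_def cube_def)
  hence "card (P1 n f g \<phi>) = (\<Sum>S\<in>Pow {k..<n}. card {x\<in>P1 n f g \<phi>. key k x = S})"
    by simp
  hence "real (card (P1 n f g \<phi>)) = (\<Sum>S\<in>Pow {k..<n}. real (card {x\<in>P1 n f g \<phi>. key k x = S}))"
    by simp
  also have "\<dots> \<le> dev n f g k" unfolding dev_def
  proof (intro sum_mono)
    fix S assume S: "S \<in> Pow {k..<n}"
    let ?B = "blk n k S"
    have eq: "real (cnt n k f S) - real (cnt n k g S) =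
         real (card {x\<in>?B. f x \<and> \<not> g (\<phi> x)}) - real (card {x\<in>?B. \<not> f x \<and> g (\<phi> x)})"
      unfolding cnt_def using pres_image[OF assms(1,2)] by (intro blk_count) (auto simp: blk_def)
    have e1: "{x\<in>P1 n f g \<phi>. key k x = S} = {x\<in>?B. f x \<and> \<not> g (\<phi> x)}"
      by (auto simp: P1_def blk_def)
    have "{x\<in>?B. f x \<and> \<not> g (\<phi> x)} = {} \<or> {x\<in>?B. \<not> f x \<and> g (\<phi> x)} = {}"
    proof (rule ccontr)
      assume "\<not> ?thesis"
      then obtain x y where "x \<in> ?B" "f x \<and> \<not> g (\<phi> x)" "y \<in> ?B" "\<not> f y \<and> g (\<phi> y)" by blast
      hence "x \<in> P1 n f g \<phi>" "y \<in> P2 n f g \<phi>" "key k x = key k y" by (auto simp: blk_def P1_def P2_def)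
      thus False using assms(3) unfolding oneS_def by blast
    qed
    moreover have "\<And>A B :: nat set set. A = {} \<or> B = {} \<Longrightarrow> real (card A) \<le> \<bar>real (card A) - real (card B)\<bar>"
      by auto
    ultimately show "real (card {x\<in>P1 n f g \<phi>. key k x = S}) \<le> \<bar>real (cnt n k f S) - real (cnt n k g S)\<bar>"
      unfolding e1 eq by blast
  qed
  finally show ?thesis .
qed

lemma key_Suc: "key (Suc k) x = key k x - {k}"
  by (auto simp: key_def)

lemma level_lemma:
  "k \<le> n \<Longrightarrow> \<exists>\<phi>. bij_betw \<phi> (cube n) (cube n) \<and> pres n k \<phi> \<and> oneS n f g k \<phi> \<and>
      cost n \<phi> \<le> (\<Sum>j<k. 2 * (real j + 1) * dev n f g j)"
proof (induction k)
  case 0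
  have "oneS n f g 0 id" unfolding oneS_def P1_def P2_def key_def by auto
  moreover have "cost n id = 0" by (simp add: cost_def)
  moreover have "bij_betw id (cube n) (cube n)" by simp
  moreover have "pres n 0 id" by (simp add: pres_def)
  ultimately show ?case by (metis lessThan_0 sum.empty order_refl)
next
  case (Suc k)
  then obtain \<phi> where \<phi>: "bij_betw \<phi> (cube n) (cube n)" "pres n k \<phi>" "oneS n f g k \<phi>"
      "cost n \<phi> \<le> (\<Sum>j<k. 2 * (real j + 1) * dev n f g j)" by auto
  have pres': "pres n (Suc k) \<phi>" using \<phi>(2) by (auto simp: pres_def key_Suc)
  from swap_lemma[where f=f and g=g, OF refl \<phi>(1) pres'] obtain \<psi> where \<psi>:
    "bij_betw \<psi> (cube n) (cube n)" "pres n (Suc k) \<psi>" "oneS n f g (Suc k) \<psi>"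
    "cost n \<psi> \<le> cost n \<phi> + real (2 * Suc k) * (real (card (P1 n f g \<phi>)) - real (card (P1 n f g \<psi>)))"
    by blast
  have "2 * real (Suc k) * (real (card (P1 n f g \<phi>)) - real (card (P1 n f g \<psi>)))
        \<le> 2 * real (Suc k) * dev n f g k"
    using card_P1_le[OF \<phi>(1-3)] by (intro mult_left_mono) auto
  hence "cost n \<psi> \<le> (\<Sum>j<Suc k. 2 * (real j + 1) * dev n f g j)"
    using \<psi>(4) \<phi>(4) by (simp add: algebra_simps)
  thus ?case using \<psi> by blast
qed

lemma mapping_exists:
  assumes "balanced n f" "balanced n g"
  shows "\<exists>\<phi>. is_mapping n f g \<phi> \<and> cost n \<phi> \<le> (\<Sum>j<n. 2 * (real j + 1) * dev n f g j)"
proof -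
  obtain \<phi> where \<phi>: "bij_betw \<phi> (cube n) (cube n)" "pres n n \<phi>" "oneS n f g n \<phi>"
      "cost n \<phi> \<le> (\<Sum>j<n. 2 * (real j + 1) * dev n f g j)" using level_lemma[of n n f g] by auto
  have bl: "blk n n {} = cube n" by (auto simp: blk_def key_def cube_def)
  have eq: "real (card {x\<in>cube n. f x}) - real (card {x\<in>cube n. g x}) =
         real (card {x\<in>cube n. f x \<and> \<not> g (\<phi> x)}) - real (card {x\<in>cube n. \<not> f x \<and> g (\<phi> x)})"
    using pres_image[OF \<phi>(1,2), of "{}"] unfolding bl by (intro blk_count) auto
  have "real (card {x\<in>cube n. f x}) = real (card {x\<in>cube n. g x})"
    using assms by (simp add: balanced_def)
  hence eq2: "card (P1 n f g \<phi>) = card (P2 n f g \<phi>)" using eq by (simp add: P1_def P2_def)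
  have kn: "\<And>x. x \<in> cube n \<Longrightarrow> key n x = {}" by (auto simp: key_def cube_def)
  have "P1 n f g \<phi> = {} \<or> P2 n f g \<phi> = {}"
  proof (rule ccontr)
    assume "\<not> ?thesis"
    then obtain x y where x: "x \<in> P1 n f g \<phi>" and y: "y \<in> P2 n f g \<phi>" by blast
    have "x \<in> cube n" "y \<in> cube n" using x y unfolding P1_def P2_def by auto
    hence "key n x = key n y" using kn by simp
    thus False using \<phi>(3) x y unfolding oneS_def by blast
  qed
  moreover have "finite (P1 n f g \<phi>)" "finite (P2 n f g \<phi>)" unfolding P1_def P2_def by auto
  ultimately have "P1 n f g \<phi> = {} \<and> P2 n f g \<phi> = {}"
    using eq2 by (metis card_0_eq card.empty)
  hence "\<forall>z\<in>cube n. f z = g (\<phi> z)" by (auto simp: P1_def P2_def)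
  thus ?thesis using \<phi> by (auto simp: is_mapping_def)
qed



lemma pow_union_sum:
  fixes F :: "'a set \<Rightarrow> real"
  assumes "finite A" "finite B" "A \<inter> B = {}"
  shows "(\<Sum>T\<in>Pow (A \<union> B). F T) = (\<Sum>U\<in>Pow A. \<Sum>V\<in>Pow B. F (U \<union> V))"
proof -
  have img: "Pow (A \<union> B) = (\<lambda>(U,V). U \<union> V) ` (Pow A \<times> Pow B)"
  proof (intro equalityI subsetI)
    fix T assume "T \<in> Pow (A \<union> B)"
    hence "T = (T \<inter> A) \<union> (T \<inter> B)" "(T \<inter> A, T \<inter> B) \<in> Pow A \<times> Pow B" by auto
    thus "T \<in> (\<lambda>(U,V). U \<union> V) ` (Pow A \<times> Pow B)" by (metis (no_types, lifting) case_prod_conv image_eqI)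
  qed auto
  have inj: "inj_on (\<lambda>(U,V). U \<union> V) (Pow A \<times> Pow B)"
  proof (rule inj_onI, clarsimp)
    fix U V U' V' assume "U \<subseteq> A" "V \<subseteq> B" "U' \<subseteq> A" "V' \<subseteq> B" "U \<union> V = U' \<union> V'"
    thus "U = U' \<and> V = V'" using assms(3) by blast
  qed
  have "(\<Sum>T\<in>Pow (A \<union> B). F T) = (\<Sum>p\<in>Pow A \<times> Pow B. F ((\<lambda>(U,V). U \<union> V) p))"
    unfolding img by (rule sum.reindex[OF inj, unfolded comp_def])
  also have "\<dots> = (\<Sum>(U,V)\<in>Pow A \<times> Pow B. F (U \<union> V))"
    by (intro sum.cong refl) (auto split: prod.splits)
  also have "\<dots> = (\<Sum>U\<in>Pow A. \<Sum>V\<in>Pow B. F (U \<union> V))"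
    by (rule sum.cartesian_product[symmetric])
  finally show ?thesis .
qed

lemma family_sum_prod:
  fixes h :: "'i \<Rightarrow> 'a set \<Rightarrow> real"
  assumes "finite I" "\<And>i. i \<in> I \<Longrightarrow> finite (B i)"
    "\<And>i j. i \<in> I \<Longrightarrow> j \<in> I \<Longrightarrow> i \<noteq> j \<Longrightarrow> B i \<inter> B j = {}"
  shows "(\<Sum>T\<in>Pow (\<Union>i\<in>I. B i). \<Prod>i\<in>I. h i (T \<inter> B i)) = (\<Prod>i\<in>I. \<Sum>U\<in>Pow (B i). h i U)"
  using assms
proof (induction I rule: finite_induct)
  case empty thus ?case by simp
next
  case (insert i0 I)
  let ?R = "\<Union>i\<in>I. B i"
  have fin: "finite (B i0)" "finite ?R" using insert by auto
  have disj: "B i0 \<inter> ?R = {}" using insert.prems(2) insert.hyps(2) by fastforce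
  have "(\<Sum>T\<in>Pow (\<Union>i\<in>insert i0 I. B i). \<Prod>i\<in>insert i0 I. h i (T \<inter> B i))
      = (\<Sum>T\<in>Pow (B i0 \<union> ?R). h i0 (T \<inter> B i0) * (\<Prod>i\<in>I. h i (T \<inter> B i)))"
    using insert.hyps by simp
  also have "\<dots> = (\<Sum>U\<in>Pow (B i0). \<Sum>V\<in>Pow ?R. h i0 ((U \<union> V) \<inter> B i0) * (\<Prod>i\<in>I. h i ((U \<union> V) \<inter> B i)))"
    by (rule pow_union_sum[OF fin disj])
  also have "\<dots> = (\<Sum>U\<in>Pow (B i0). \<Sum>V\<in>Pow ?R. h i0 U * (\<Prod>i\<in>I. h i (V \<inter> B i)))"
  proof (intro sum.cong refl)
    fix U V assume U: "U \<in> Pow (B i0)" and V: "V \<in> Pow ?R"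
    have "(U \<union> V) \<inter> B i0 = U" using U V disj by auto
    moreover have "\<And>i. i \<in> I \<Longrightarrow> (U \<union> V) \<inter> B i = V \<inter> B i"
    proof -
      fix i assume i: "i \<in> I"
      have "B i0 \<inter> B i = {}" using insert.prems(2) i insert.hyps(2) by (metis insertI1 insertI2)
      thus "(U \<union> V) \<inter> B i = V \<inter> B i" using U by auto
    qed
    ultimately show "h i0 ((U \<union> V) \<inter> B i0) * (\<Prod>i\<in>I. h i ((U \<union> V) \<inter> B i)) = h i0 U * (\<Prod>i\<in>I. h i (V \<inter> B i))"
      by simp
  qed
  also have "\<dots> = (\<Sum>U\<in>Pow (B i0). h i0 U) * (\<Sum>V\<in>Pow ?R. \<Prod>i\<in>I. h i (V \<inter> B i))"
    by (rule sum_product[symmetric])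
  also have "(\<Sum>V\<in>Pow ?R. \<Prod>i\<in>I. h i (V \<inter> B i)) = (\<Prod>i\<in>I. \<Sum>U\<in>Pow (B i). h i U)"
    using insert by (intro insert.IH) auto
  finally show ?case using insert.hyps by simp
qed

lemma pow_exp_sum:
  fixes \<mu> :: real
  assumes "finite B"
  shows "(\<Sum>U\<in>Pow B. exp (\<mu> * (real (card U) - real (card B) / 2))) = (exp (\<mu>/2) + exp (-\<mu>/2)) ^ card B"
  using assms
proof (induction B rule: finite_induct)
  case empty thus ?case by simp
next
  case (insert a B)
  have disj: "Pow B \<inter> insert a ` Pow B = {}" using insert.hyps by auto
  have inj: "inj_on (insert a) (Pow B)" using insert.hyps by (intro inj_onI) (metis Diff_insert_absorb PowD subsetD)
  have cardU: "\<And>U. U \<in> Pow B \<Longrightarrow> card (insert a U) = card U + 1"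
  proof -
    fix U assume "U \<in> Pow B"
    hence "finite U" "a \<notin> U" using insert.hyps by (auto intro: finite_subset)
    thus "card (insert a U) = card U + 1" by simp
  qed
  let ?c = "real (card B)"
  have "(\<Sum>U\<in>Pow (insert a B). exp (\<mu> * (real (card U) - real (card (insert a B)) / 2)))
     = (\<Sum>U\<in>Pow B. exp (\<mu> * (real (card U) - (1 + ?c) / 2))) +
       (\<Sum>U\<in>insert a ` Pow B. exp (\<mu> * (real (card U) - (1 + ?c) / 2)))"
    unfolding Pow_insert using insert.hyps disj by (subst sum.union_disjoint) auto
  also have "(\<Sum>U\<in>insert a ` Pow B. exp (\<mu> * (real (card U) - (1 + ?c) / 2)))
      = (\<Sum>U\<in>Pow B. exp (\<mu> * (real (card (insert a U)) - (1 + ?c) / 2)))"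
    by (rule sum.reindex[OF inj, unfolded comp_def])
  also have "\<dots> = (\<Sum>U\<in>Pow B. exp (\<mu> * (real (card U) - ?c / 2))) * exp (\<mu>/2)"
    unfolding sum_distrib_right
    by (intro sum.cong refl) (simp add: cardU exp_add[symmetric] algebra_simps add_divide_distrib)
  also have "(\<Sum>U\<in>Pow B. exp (\<mu> * (real (card U) - (1 + ?c) / 2)))
      = (\<Sum>U\<in>Pow B. exp (\<mu> * (real (card U) - ?c / 2))) * exp (-\<mu>/2)"
    unfolding sum_distrib_right
    by (intro sum.cong refl) (simp add: exp_add[symmetric] algebra_simps add_divide_distrib)
  finally show ?case using insert.hyps insert.IH
    by (simp add: algebra_simps)
qed

lemma cosh_bound:
  fixes l :: real assumes "l \<ge> 0"
  shows "exp (l/2) + exp (-l/2) \<le> 2 * exp (l^2/8)"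
proof -
  have h: "- l * (1/2) + ln (1 + (1/2) * (exp l - 1)) \<le> l\<^sup>2 / 8"
    by (rule Hoeffdings_lemma_aux) (use assms in auto)
  have e: "1 + (1/2) * (exp l - 1) = (1 + exp l) / 2" by (simp add: field_simps)
  from h[unfolded e] have "ln ((1 + exp l) / 2) \<le> l/2 + l^2/8" by (simp add: power2_eq_square)
  hence "(1 + exp l) / 2 \<le> exp (l/2 + l^2/8)"
    by (metis add_pos_pos divide_pos_pos exp_gt_zero exp_le_cancel_iff exp_ln zero_less_one zero_less_numeral)
  hence "exp (-l/2) * ((1 + exp l) / 2) \<le> exp (-l/2) * exp (l/2 + l^2/8)"
    by (intro mult_left_mono) auto
  moreover have "exp (-l/2) * ((1 + exp l) / 2) = (exp (-l/2) + exp (l/2)) / 2"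
    by (simp add: field_simps exp_add[symmetric])
  moreover have "exp (-l/2) * exp (l/2 + l^2/8) = exp (l^2/8)"
    by (simp add: exp_add[symmetric])
  ultimately have "(exp (-l/2) + exp (l/2)) / 2 \<le> exp (l^2/8)" by metis
  thus ?thesis by (simp add: field_simps)
qed

lemma exp_abs_le: fixes l t :: real shows "exp (l * \<bar>t\<bar>) \<le> exp (l * t) + exp ((-l) * t)"
proof -
  show ?thesis
  proof (cases "t \<ge> 0")
    case True then have "exp (l * \<bar>t\<bar>) = exp (l * t)" by simp
    moreover have "exp ((-l) * t) > 0" by simp
    ultimately show ?thesis by linarith
  next
    case False then have "exp (l * \<bar>t\<bar>) = exp ((-l) * t)" by simp
    moreover have "exp (l * t) > 0" by simp
    ultimately show ?thesis by linarith
  qed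
qed

lemma block_bound:
  fixes l :: real
  assumes "finite B" "l \<ge> 0"
  shows "(\<Sum>U\<in>Pow B. exp (l * \<bar>real (card U) - real (card B) / 2\<bar>)) \<le> 2 * (2 * exp (l^2/8)) ^ card B"
proof -
  have "(\<Sum>U\<in>Pow B. exp (l * \<bar>real (card U) - real (card B) / 2\<bar>))
     \<le> (\<Sum>U\<in>Pow B. exp (l * (real (card U) - real (card B) / 2)) + exp ((-l) * (real (card U) - real (card B) / 2)))"
    by (intro sum_mono exp_abs_le)
  also have "\<dots> = (exp (l/2) + exp (-l/2)) ^ card B + (exp ((-l)/2) + exp (-(-l)/2)) ^ card B"
    using pow_exp_sum[OF assms(1), of l] pow_exp_sum[OF assms(1), of "-l"] by (simp only: sum.distrib)
  also have "\<dots> = 2 * (exp (l/2) + exp (-l/2)) ^ card B" by (simp add: add.commute)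
  also have "\<dots> \<le> 2 * (2 * exp (l^2/8)) ^ card B"
    using cosh_bound[OF assms(2)] by (intro mult_left_mono power_mono) (auto intro: add_nonneg_nonneg)
  finally show ?thesis .
qed



definition Edev :: "nat \<Rightarrow> nat \<Rightarrow> nat set set \<Rightarrow> real" where
  "Edev n k T = (\<Sum>S\<in>Pow {k..<n}. \<bar>real (card (T \<inter> blk n k S)) - real (card (blk n k S)) / 2\<bar>)"

lemma cube_UN_blk: "cube n = (\<Union>S\<in>Pow {k..<n}. blk n k S)"
  unfolding blk_def using key_cube[of _ n k] by blast

lemma blk_finite: "finite (blk n k S)" by (simp add: blk_def)

lemma sum_card_blk: "(\<Sum>S\<in>Pow {k..<n}. card (blk n k S)) = 2 ^ n"
proof -
  have "(\<Sum>S\<in>Pow {k..<n}. sum (\<lambda>_. 1::nat) {x\<in>cube n. key k x = S}) = sum (\<lambda>_. 1) (cube n)"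
    by (rule sum.group) (auto simp: key_def cube_def)
  thus ?thesis by (simp add: blk_def card_cube)
qed

lemma mgf_bound:
  fixes l :: real assumes "l \<ge> 0"
  shows "(\<Sum>T\<in>Pow (cube n). exp (l * Edev n k T)) \<le> 2 ^ card (Pow {k..<n}) * (2 * exp (l^2/8)) ^ (2 ^ n)"
proof -
  let ?I = "Pow {k..<n}"
  let ?h = "\<lambda>S U. exp (l * \<bar>real (card U) - real (card (blk n k S)) / 2\<bar>)"
  have "(\<Sum>T\<in>Pow (cube n). exp (l * Edev n k T)) = (\<Sum>T\<in>Pow (\<Union>S\<in>?I. blk n k S). \<Prod>S\<in>?I. ?h S (T \<inter> blk n k S))"
    unfolding cube_UN_blk[of n k, symmetric] Edev_def sum_distrib_left
    by (intro sum.cong refl) (simp add: exp_sum)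
  also have "\<dots> = (\<Prod>S\<in>?I. \<Sum>U\<in>Pow (blk n k S). ?h S U)"
    by (rule family_sum_prod) (auto simp: blk_finite blk_def)
  also have "\<dots> \<le> (\<Prod>S\<in>?I. 2 * (2 * exp (l^2/8)) ^ card (blk n k S))"
    by (intro prod_mono conjI sum_nonneg block_bound blk_finite assms) auto
  also have "\<dots> = 2 ^ card ?I * (2 * exp (l^2/8)) ^ (\<Sum>S\<in>?I. card (blk n k S))"
    by (simp add: prod.distrib power_sum)
  also have "\<dots> = 2 ^ card ?I * (2 * exp (l^2/8)) ^ (2 ^ n)" by (simp add: sum_card_blk)
  finally show ?thesis .
qed

lemma markov_count:
  fixes E :: "'a \<Rightarrow> real"
  assumes "finite A" and that: "l \<ge> 0"
  shows "real (card {T\<in>A. th \<le> E T}) * exp (l * th) \<le> (\<Sum>T\<in>A. exp (l * E T))"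
proof -
  have "real (card {T\<in>A. th \<le> E T}) * exp (l * th) = (\<Sum>T\<in>{T\<in>A. th \<le> E T}. exp (l * th))" by simp
  also have "\<dots> \<le> (\<Sum>T\<in>{T\<in>A. th \<le> E T}. exp (l * E T))"
    using that by (intro sum_mono) (auto intro: mult_left_mono)
  also have "\<dots> \<le> (\<Sum>T\<in>A. exp (l * E T))"
    using assms by (intro sum_mono2) auto
  finally show ?thesis .
qed



lemma div_exp: fixes c B a b :: real assumes "c * exp a \<le> B * exp b" shows "c \<le> B * exp (b - a)"
proof -
  have "c * exp a * exp (-a) \<le> B * exp b * exp (-a)" using assms by (intro mult_right_mono) auto
  thus ?thesis by (simp add: mult.assoc exp_add[symmetric])
qed

lemma level_bad_count:
  assumes "k \<le> n"
  shows "real (card {T\<in>Pow (cube n). 2 ^ n * 2 powr (- real k / 3) \<le> Edev n k T})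
          \<le> 2 ^ (2 ^ n) * exp (- (2 powr (real n / 3)))"
proof -
  define r where "r = (2::real) powr (- real k / 3)"
  define A where "A = (2::real) ^ n"
  define l where "l = 4 * r"
  have r0: "r > 0" unfolding r_def by auto
  have r1: "r \<le> 1" unfolding r_def using powr_mono[of "-real k/3" 0 2] by simp
  have A0: "A > 0" unfolding A_def by simp
  have l0: "l \<ge> 0" using r0 unfolding l_def by simp
  have cI: "card (Pow {k..<n}) = 2 ^ (n - k)" by (simp add: card_Pow)
  have "real (card {T\<in>Pow (cube n). A * r \<le> Edev n k T}) * exp (l * (A * r))
        \<le> 2 ^ (2 ^ (n - k)) * (2 * exp (l^2/8)) ^ (2 ^ n)"
    using markov_count[OF _ l0, of "Pow (cube n)" "A * r" "Edev n k"] mgf_bound[OF l0, of n k] cI by simp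
  also have "(2::real) ^ (2 ^ (n - k)) = exp (real (2 ^ (n - k)) * ln 2)"
    by (subst powr_realpow[symmetric]) (simp_all add: powr_def)
  also have "(2 * exp (l^2/8)) ^ (2 ^ n) = 2 ^ (2 ^ n) * exp (A * (l^2/8))"
    unfolding A_def power_mult_distrib by (simp add: exp_of_nat_mult[symmetric])
  finally have *: "real (card {T\<in>Pow (cube n). A * r \<le> Edev n k T}) * exp (l * (A * r))
        \<le> 2 ^ (2 ^ n) * exp (real (2 ^ (n - k)) * ln 2 + A * (l^2/8))"
    by (simp add: exp_add algebra_simps)
  have **: "real (card {T\<in>Pow (cube n). A * r \<le> Edev n k T})
        \<le> 2 ^ (2 ^ n) * exp (real (2 ^ (n - k)) * ln 2 + A * (l^2/8) - l * (A * r))"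
    by (rule div_exp[OF *])
  have r3: "r ^ 3 = 2 powr (- real k)"
  proof -
    have "r ^ 3 = 2 powr (of_nat 3 * (- real k / 3))" unfolding r_def
      by (rule powr_power) simp
    thus ?thesis by simp
  qed
  have e1: "real (2 ^ (n - k)) = A * r ^ 3"
  proof -
    have "(2::real) ^ n = 2 ^ (n - k) * 2 ^ k" using assms by (simp add: power_add[symmetric])
    moreover have "(2::real) ^ k * 2 powr (- real k) = 1" by (simp add: powr_minus powr_realpow)
    ultimately show ?thesis unfolding r3 A_def by (simp add: mult.assoc)
  qed
  have r32: "r ^ 3 \<le> r ^ 2" using r0 r1 by (intro power_decreasing) auto
  have "real (2 ^ (n - k)) * ln 2 \<le> A * r ^ 2"
  proof -
    have "real (2 ^ (n - k)) * ln 2 \<le> real (2 ^ (n - k)) * 1"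
      using ln_2_less_1 by (intro mult_left_mono) auto
    also have "\<dots> \<le> A * r ^ 2" unfolding e1 using A0 r32 by simp
    finally show ?thesis .
  qed
  hence ex: "real (2 ^ (n - k)) * ln 2 + A * (l^2/8) - l * (A * r) \<le> - (A * r ^ 2)"
    unfolding l_def by (simp add: power2_eq_square algebra_simps)
  have "A * r ^ 2 = 2 powr (real n - 2 * real k / 3)"
  proof -
    have "(2::real) ^ n = 2 powr real n" by (simp add: powr_realpow)
    moreover have "r ^ 2 = 2 powr (of_nat 2 * (- real k / 3))" unfolding r_def
      by (rule powr_power) simp
    ultimately show ?thesis unfolding A_def by (simp add: powr_add[symmetric])
  qed
  also have "\<dots> \<ge> 2 powr (real n / 3)" using assms by (intro powr_mono) auto
  finally have "- (A * r ^ 2) \<le> - (2 powr (real n / 3))" by simp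
  with ex have "exp (real (2 ^ (n - k)) * ln 2 + A * (l^2/8) - l * (A * r)) \<le> exp (- (2 powr (real n / 3)))"
    by simp
  with ** have "real (card {T\<in>Pow (cube n). A * r \<le> Edev n k T}) \<le> 2 ^ (2 ^ n) * exp (- (2 powr (real n / 3)))"
    by (smt (verit) mult_left_mono zero_le_power)
  thus ?thesis unfolding A_def r_def .
qed



lemma sum_jr:
  fixes r :: real assumes "0 \<le> r" "r < 1"
  shows "(\<Sum>j<n. (real j + 1) * r ^ j) \<le> 1 / (1 - r)^2"
proof -
  define d where "d = (1 - r)^2"
  have d0: "d > 0" unfolding d_def using assms by simp
  define T where "T m = r ^ m * ((real m + 1) * (1 - r) + r) / d" for m
  have poly: "(real m + 1) * (1 - r) + r = (real m + 1) * d + r * ((real (Suc m) + 1) * (1 - r) + r)" for m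
    unfolding d_def by (simp add: algebra_simps power2_eq_square)
  have step: "T m = (real m + 1) * r ^ m + T (Suc m)" for m
  proof -
    have "T m = r ^ m * ((real m + 1) * d + r * ((real (Suc m) + 1) * (1 - r) + r)) / d"
      unfolding T_def poly[of m] by simp
    also have "\<dots> = (real m + 1) * r ^ m * d / d + r ^ Suc m * ((real (Suc m) + 1) * (1 - r) + r) / d"
      using d0 by (simp add: field_simps)
    also have "\<dots> = (real m + 1) * r ^ m + T (Suc m)" unfolding T_def using d0 by simp
    finally show ?thesis .
  qed
  have eq: "(\<Sum>j<m. (real j + 1) * r ^ j) + T m = 1 / (1 - r)^2" for m
  proof (induction m)
    case 0 show ?case unfolding T_def d_def by simp
  next
    case (Suc m) thus ?case using step[of m] by simp
  qed
  have "T n \<ge> 0" unfolding T_def using assms d0 by (intro mult_nonneg_nonneg add_nonneg_nonneg divide_nonneg_pos) auto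
  thus ?thesis using eq[of n] by linarith
qed

definition Tf :: "nat \<Rightarrow> (nat set \<Rightarrow> bool) \<Rightarrow> nat set set" where "Tf n f = {x\<in>cube n. f x}"

lemma cnt_Tf: "cnt n k f S = card (Tf n f \<inter> blk n k S)"
  unfolding cnt_def Tf_def blk_def by (rule arg_cong[where f=card]) auto

lemma dev_le: "dev n f g k \<le> Edev n k (Tf n f) + Edev n k (Tf n g)"
  unfolding dev_def Edev_def cnt_Tf sum.distrib[symmetric]
  by (intro sum_mono) arith

definition th :: "nat \<Rightarrow> nat \<Rightarrow> real" where "th n k = 2 ^ n * 2 powr (- real k / 3)"

definition rr :: real where "rr = 2 powr (- 1 / 3)"

lemma rr_props: "0 \<le> rr" "rr < 1"
  unfolding rr_def using powr_less_mono[of "-1/3" 0 2] by auto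

lemma rr_pow: "rr ^ j = 2 powr (- real j / 3)"
proof -
  have "rr ^ j = 2 powr (of_nat j * (- 1 / 3))" unfolding rr_def by (rule powr_power) simp
  thus ?thesis by simp
qed

definition KK :: real where "KK = 1 / (1 - rr) ^ 2"

lemma good_cost:
  assumes "balanced n f" "balanced n g"
    "\<forall>k<n. Edev n k (Tf n f) < th n k" "\<forall>k<n. Edev n k (Tf n g) < th n k"
  shows "\<exists>\<phi>. is_mapping n f g \<phi> \<and> cost n \<phi> \<le> 4 * 2 ^ n * KK"
proof -
  obtain \<phi> where \<phi>: "is_mapping n f g \<phi>" "cost n \<phi> \<le> (\<Sum>j<n. 2 * (real j + 1) * dev n f g j)"
    using mapping_exists[OF assms(1,2)] by blast
  have "(\<Sum>j<n. 2 * (real j + 1) * dev n f g j) \<le> (\<Sum>j<n. 2 * (real j + 1) * (2 * th n j))"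
  proof (intro sum_mono mult_left_mono)
    fix j assume "j \<in> {..<n}"
    thus "dev n f g j \<le> 2 * th n j" using dev_le[of n f g j] assms(3,4) by fastforce
  qed auto
  also have "\<dots> = 4 * 2 ^ n * (\<Sum>j<n. (real j + 1) * rr ^ j)"
    unfolding th_def rr_pow by (simp add: sum_distrib_left algebra_simps)
  also have "\<dots> \<le> 4 * 2 ^ n * KK"
    unfolding KK_def using sum_jr[OF rr_props] by (intro mult_left_mono) auto
  finally show ?thesis using \<phi> by (intro exI[of _ \<phi>]) auto
qed

lemma good_stretch:
  assumes "balanced n f" "balanced n g" "n > 0"
    "\<forall>k<n. Edev n k (Tf n f) < th n k" "\<forall>k<n. Edev n k (Tf n g) < th n k"
  shows "\<exists>\<phi>. is_mapping n f g \<phi> \<and> avgStretch n \<phi> \<le> 1 + 8 * KK \<and>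
              avgStretch n (the_inv_into (cube n) \<phi>) \<le> 1 + 8 * KK"
proof -
  obtain \<phi> where \<phi>: "is_mapping n f g \<phi>" "cost n \<phi> \<le> 4 * 2 ^ n * KK"
    using good_cost[OF assms(1,2,4,5)] by blast
  have bij: "bij_betw \<phi> (cube n) (cube n)" using \<phi>(1) by (simp add: is_mapping_def)
  have m1: "\<forall>x\<in>cube n. \<phi> x \<in> cube n" using bij by (auto simp: bij_betw_def)
  have c: "2 * cost n \<phi> / 2 ^ n \<le> 8 * KK" using \<phi>(2) by (simp add: divide_le_eq algebra_simps)
  have "avgStretch n \<phi> \<le> 1 + 8 * KK" using avgStretch_cost[OF m1 assms(3)] c by linarith
  moreover have "avgStretch n (the_inv_into (cube n) \<phi>) \<le> 1 + 8 * KK"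
    using avgStretch_cost[OF inv_maps[OF bij] assms(3)] c unfolding cost_inv[OF bij] by linarith
  ultimately show ?thesis using \<phi>(1) by blast
qed

lemma any_stretch:
  assumes "balanced n f" "balanced n g"
  shows "\<exists>\<phi>. is_mapping n f g \<phi> \<and> avgStretch n \<phi> \<le> n \<and>
              avgStretch n (the_inv_into (cube n) \<phi>) \<le> n"
proof -
  obtain \<phi> where \<phi>: "is_mapping n f g \<phi>"
    using mapping_exists[OF assms(1,2)] by blast
  have bij: "bij_betw \<phi> (cube n) (cube n)" using \<phi>(1) by (simp add: is_mapping_def)
  have m1: "\<forall>x\<in>cube n. \<phi> x \<in> cube n" using bij by (auto simp: bij_betw_def)
  show ?thesis using \<phi> avgStretch_le_n[OF m1] avgStretch_le_n[OF inv_maps[OF bij]] by blast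
qed

lemma Tf_inj: "inj_on (Tf n) (boolfuns n)"
proof (rule inj_onI)
  fix f g assume f: "f \<in> boolfuns n" and g: "g \<in> boolfuns n" and e: "Tf n f = Tf n g"
  show "f = g"
  proof
    fix x show "f x = g x"
    proof (cases "x \<in> cube n")
      case True thus ?thesis using e unfolding Tf_def by blast
    next
      case False thus ?thesis using f g by (simp add: boolfuns_def)
    qed
  qed
qed

lemma bal_boolfuns: "balanced_funs n \<subseteq> boolfuns n"
  by (auto simp: balanced_funs_def balanced_def)

lemma finite_bal: "finite (balanced_funs n)"
proof -
  have "balanced_funs n \<subseteq> (\<lambda>T x. x \<in> T) ` Pow (cube n)"
  proof
    fix f assume "f \<in> balanced_funs n"
    hence f: "f \<in> boolfuns n" using bal_boolfuns by blast
    have "f = (\<lambda>x. x \<in> Tf n f)"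
    proof
      fix x show "f x = (x \<in> Tf n f)" using f by (cases "x \<in> cube n") (auto simp: Tf_def boolfuns_def)
    qed
    moreover have "Tf n f \<in> Pow (cube n)" by (auto simp: Tf_def)
    ultimately show "f \<in> (\<lambda>T x. x \<in> T) ` Pow (cube n)" by blast
  qed
  thus ?thesis by (rule finite_subset) simp
qed

lemma card_bal:
  assumes "n > 0"
  shows "real (card (balanced_funs n)) \<ge> 2 ^ (2 ^ n) / 2 ^ n"
proof -
  have img: "Tf n ` balanced_funs n = {T. T \<subseteq> cube n \<and> card T = 2 ^ (n - 1)}"
  proof (intro equalityI subsetI)
    fix T assume "T \<in> Tf n ` balanced_funs n"
    then obtain f where f: "f \<in> balanced_funs n" "T = Tf n f" by blast
    have "real (card T) = 2 ^ n / 2" using f by (simp add: balanced_funs_def balanced_def Tf_def)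
    also have "\<dots> = real (2 ^ (n - 1))" using assms by (cases n) auto
    finally have "card T = 2 ^ (n - 1)" by (metis of_nat_eq_iff)
    thus "T \<in> {T. T \<subseteq> cube n \<and> card T = 2 ^ (n - 1)}" using f by (auto simp: Tf_def)
  next
    fix T assume T: "T \<in> {T. T \<subseteq> cube n \<and> card T = 2 ^ (n - 1)}"
    define f where "f = (\<lambda>x. x \<in> T)"
    have Tf: "Tf n f = T" using T by (auto simp: Tf_def f_def)
    have "f \<in> boolfuns n" using T by (auto simp: boolfuns_def f_def)
    moreover have "{x \<in> cube n. f x} = T" using Tf by (simp add: Tf_def)
    moreover have "real (2 ^ (n - 1)) = (2::real) ^ n / 2" using assms by (cases n) auto
    ultimately have "f \<in> balanced_funs n" using T by (simp add: balanced_funs_def balanced_def)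
    thus "T \<in> Tf n ` balanced_funs n" using Tf by blast
  qed
  have "card (balanced_funs n) = card (Tf n ` balanced_funs n)"
    using inj_on_subset[OF Tf_inj bal_boolfuns] by (simp add: card_image)
  also have "\<dots> = card (cube n) choose 2 ^ (n - 1)" unfolding img by (rule n_subsets) simp
  also have "card (cube n) = 2 * 2 ^ (n - 1)" using assms by (cases n) (auto simp: card_cube)
  finally have cb: "card (balanced_funs n) = (2 * 2 ^ (n - 1)) choose 2 ^ (n - 1)" .
  have "4 ^ (2 ^ (n - 1)) / (2 * real (2 ^ (n - 1))) \<le> real ((2 * 2 ^ (n - 1)) choose 2 ^ (n - 1))"
    by (rule central_binomial_lower_bound) simp
  moreover have "(4::real) ^ (2 ^ (n - 1)) = 2 ^ (2 ^ n)"
  proof -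
    have "(4::real) ^ (2 ^ (n - 1)) = 2 ^ (2 * 2 ^ (n - 1))" by (simp add: power_mult)
    also have "2 * 2 ^ (n - 1) = (2::nat) ^ n" using assms by (cases n) auto
    finally show ?thesis .
  qed
  moreover have "2 * real (2 ^ (n - 1)) = 2 ^ n" using assms by (cases n) auto
  ultimately show ?thesis using cb by simp
qed



lemma bad_count:
  assumes "n > 0"
  shows "real (card {f\<in>balanced_funs n. \<not> (\<forall>k<n. Edev n k (Tf n f) < th n k)})
         \<le> real n * (2 ^ (2 ^ n) * exp (- (2 powr (real n / 3))))"
proof -
  let ?Bd = "{f\<in>balanced_funs n. \<not> (\<forall>k<n. Edev n k (Tf n f) < th n k)}"
  let ?S = "\<lambda>k. {T\<in>Pow (cube n). th n k \<le> Edev n k T}"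
  have sub: "Tf n ` ?Bd \<subseteq> (\<Union>k\<in>{..<n}. ?S k)" by (auto simp: Tf_def not_less)
  have inj: "inj_on (Tf n) ?Bd" by (rule inj_on_subset[OF Tf_inj]) (use bal_boolfuns in auto)
  have "card ?Bd = card (Tf n ` ?Bd)" using inj by (simp add: card_image)
  also have "\<dots> \<le> card (\<Union>k\<in>{..<n}. ?S k)" using sub by (intro card_mono) auto
  also have "\<dots> \<le> (\<Sum>k<n. card (?S k))" by (rule card_UN_le) simp
  finally have "real (card ?Bd) \<le> (\<Sum>k<n. real (card (?S k)))" using of_nat_mono by fastforce
  also have "\<dots> \<le> (\<Sum>k<n. 2 ^ (2 ^ n) * exp (- (2 powr (real n / 3))))"
    by (intro sum_mono) (use level_bad_count[of _ n] in \<open>auto simp: th_def\<close>)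
  also have "\<dots> = real n * (2 ^ (2 ^ n) * exp (- (2 powr (real n / 3))))" by simp
  finally show ?thesis .
qed

theorem mainTheorem8:
  shows "\<exists>(c::real) (C::real). c > 0 \<and> (\<forall>n::nat.
     real (card {(f, g). f \<in> balanced_funs n \<and> g \<in> balanced_funs n \<and>
        (\<exists>\<phi>. is_mapping n f g \<phi> \<and> avgStretch n \<phi> \<le> C \<and>
              avgStretch n (the_inv_into (cube n) \<phi>) \<le> C)})
     \<ge> (1 - 2 powr (- (2 powr (c * real n)))) * real (card (balanced_funs n \<times> balanced_funs n)))"
proof -
  have ev: "eventually (\<lambda>n::nat. 2 * real n * 2 ^ n * exp (- (2 powr (real n / 3)))
              \<le> 2 powr (- (2 powr (1/6 * real n)))) at_top"
    by real_asymp
  then obtain N0 where N0: "\<And>n. n \<ge> N0 \<Longrightarrow> 2 * real n * 2 ^ n * exp (- (2 powr (real n / 3)))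
              \<le> 2 powr (- (2 powr (1/6 * real n)))"
    by (auto simp: eventually_at_top_linorder)
  define C where "C = max (real N0) (1 + 8 * KK)"
  have main: "(1 - 2 powr (- (2 powr (1/6 * real n)))) * real (card (balanced_funs n \<times> balanced_funs n))
          \<le> real (card {(f, g). f \<in> balanced_funs n \<and> g \<in> balanced_funs n \<and>
        (\<exists>\<phi>. is_mapping n f g \<phi> \<and> avgStretch n \<phi> \<le> C \<and>
              avgStretch n (the_inv_into (cube n) \<phi>) \<le> C)})" for n :: nat
  proof -
    define bal where "bal = balanced_funs n"
    define G where "G = {(f, g). f \<in> balanced_funs n \<and> g \<in> balanced_funs n \<and>
        (\<exists>\<phi>. is_mapping n f g \<phi> \<and> avgStretch n \<phi> \<le> C \<and>
              avgStretch n (the_inv_into (cube n) \<phi>) \<le> C)}"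
    define eps where "eps = (2::real) powr (- (2 powr (1/6 * real n)))"
    have finbal: "finite bal" unfolding bal_def by (rule finite_bal)
    have Gsub: "G \<subseteq> bal \<times> bal" unfolding G_def bal_def by auto
    have finG: "finite G" using Gsub finbal by (meson finite_SigmaI finite_subset)
    have eps0: "eps \<ge> 0" unfolding eps_def by simp
    have cardbb: "real (card (bal \<times> bal)) = real (card bal) * real (card bal)"
      by (simp add: card_cartesian_product)
    have "(1 - eps) * real (card (bal \<times> bal)) \<le> real (card G)"
    proof (cases "n \<le> N0")
      case True
      have "bal \<times> bal \<subseteq> G"
      proof (clarify)
        fix f g assume fg: "f \<in> bal" "g \<in> bal"
        hence "balanced n f" "balanced n g" unfolding bal_def balanced_funs_def by auto
        from any_stretch[OF this] obtain \<phi> where \<phi>: "is_mapping n f g \<phi>" "avgStretch n \<phi> \<le> n"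
          "avgStretch n (the_inv_into (cube n) \<phi>) \<le> n" by blast
        have "real n \<le> C" unfolding C_def using True by simp
        thus "(f, g) \<in> G" using \<phi> fg unfolding G_def bal_def by fastforce
      qed
      hence "G = bal \<times> bal" using Gsub by blast
      moreover have "eps * real (card (bal \<times> bal)) \<ge> 0" using eps0 by simp
      ultimately show ?thesis by (simp add: left_diff_distrib)
    next
      case False
      hence n0: "n > 0" and nN: "n \<ge> N0" by auto
      define Bd where "Bd = {f\<in>balanced_funs n. \<not> (\<forall>k<n. Edev n k (Tf n f) < th n k)}"
      define good where "good = bal - Bd"
      have "good \<times> good \<subseteq> G"
      proof (clarify)
        fix f g assume fg: "f \<in> good" "g \<in> good"
        hence b: "balanced n f" "balanced n g" unfolding good_def bal_def balanced_funs_def by auto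
        have e: "\<forall>k<n. Edev n k (Tf n f) < th n k" "\<forall>k<n. Edev n k (Tf n g) < th n k"
          using fg unfolding good_def Bd_def bal_def by auto
        from good_stretch[OF b n0 e] obtain \<phi> where \<phi>: "is_mapping n f g \<phi>" "avgStretch n \<phi> \<le> 1 + 8 * KK"
          "avgStretch n (the_inv_into (cube n) \<phi>) \<le> 1 + 8 * KK" by blast
        have "1 + 8 * KK \<le> C" unfolding C_def by simp
        thus "(f, g) \<in> G" using \<phi> b unfolding G_def balanced_funs_def by fastforce
      qed
      hence cg: "card (good \<times> good) \<le> card G" using finG by (rule card_mono[rotated])
      have Bdsub: "Bd \<subseteq> bal" unfolding Bd_def bal_def by auto
      define b where "b = real (card bal)"
      define \<beta> where "\<beta> = real (card Bd)"
      have cgood: "real (card good) = b - \<beta>"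
        unfolding good_def b_def \<beta>_def using Bdsub finbal by (simp add: card_Diff_subset finite_subset of_nat_diff card_mono)
      have "real (card (good \<times> good)) = (b - \<beta>) * (b - \<beta>)"
        using cgood by (simp add: card_cartesian_product)
      with cg have G1: "(b - \<beta>) * (b - \<beta>) \<le> real (card G)" by (metis of_nat_le_iff)
      define X where "X = (2::real) ^ (2 ^ n) / 2 ^ n"
      have Xb: "X \<le> b" unfolding X_def b_def bal_def using card_bal[OF n0] by simp
      have \<beta>b: "\<beta> \<le> real n * (2 ^ (2 ^ n) * exp (- (2 powr (real n / 3))))"
        unfolding \<beta>_def Bd_def using bad_count[OF n0] .
      have "2 * \<beta> \<le> (2 * real n * 2 ^ n * exp (- (2 powr (real n / 3)))) * X"
        using \<beta>b unfolding X_def by (simp add: field_simps)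
      also have "\<dots> \<le> eps * X"
        unfolding eps_def using N0[OF nN] by (intro mult_right_mono) (auto simp: X_def)
      also have "\<dots> \<le> eps * b" using Xb eps0 by (intro mult_left_mono)
      finally have "2 * \<beta> \<le> eps * b" .
      hence "2 * \<beta> * b \<le> eps * b * b" using b_def by (intro mult_right_mono) auto
      hence "(1 - eps) * (b * b) \<le> (b - \<beta>) * (b - \<beta>)"
        by (simp add: algebra_simps) (smt (verit) zero_le_square mult_nonneg_nonneg)
      thus ?thesis using G1 unfolding cardbb b_def by (rule order_trans)
    qed
    thus "(1 - 2 powr (- (2 powr (1/6 * real n)))) * real (card (balanced_funs n \<times> balanced_funs n))
          \<le> real (card {(f, g). f \<in> balanced_funs n \<and> g \<in> balanced_funs n \<and>
        (\<exists>\<phi>. is_mapping n f g \<phi> \<and> avgStretch n \<phi> \<le> C \<and>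
              avgStretch n (the_inv_into (cube n) \<phi>) \<le> C)})"
      unfolding eps_def G_def bal_def .
  qed
  show ?thesis
    by (rule exI[of _ "1/6::real"], rule exI[of _ C]) (use main in auto)
qed

end
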